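(* Let $g:\mathbb{R}^n\to\mathbb{R}\cup\{+\infty\}$ be a proper closed convex function and let $f=f_1-f_2$, where $f_1,f_2:\mathbb{R}^n\to\mathbb{R}$ are convex differentiable functions such that $\nabla f_1$ is Lipschitz continuous with modulus $L>0$, $\nabla f_2$ is Lipschitz continuous with modulus $l\ge 0$, and $L\ge l$. Let $F=f+g$, and assume $\inf F>-\infty$ and that this infimum is attained. Let $\{x^k\}$ be generated by Algorithm 1 (described in the context) and suppose $\bar\beta:=\sup_k\beta_k<\sqrt{L/(L+l)}$. Then: (i) $\sum_{k=0}^\infty\|x^{k+1}-x^k\|^2<\infty$; (ii) any accumulation point of $\{x^k\}$ is a stationary point of $F$, i.e., a point $\bar x$ with $0\in\nabla f(\bar x)+\partial g(\bar x)$.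
   Context: $\partial g$ denotes the convex subdifferential. For a proper closed convex $h$, $\mathrm{Prox}_h(v)=\arg\min_{x\in\mathbb{R}^n}\{h(x)+\tfrac12\|x-v\|^2\}$. Algorithm 1 (proximal gradient algorithm with extrapolation): choose $x^0\in\operatorname{dom} g$ and $\{\beta_k\}\subseteq[0,\sqrt{L/(L+l)}]$, set $x^{-1}=x^0$, and for $k=0,1,2,\dots$ set $y^k=x^k+\beta_k(x^k-x^{k-1})$ and $x^{k+1}=\mathrm{Prox}_{\frac1L g}\big(y^k-\tfrac1L\nabla f(y^k)\big)$. *)

theory Defs
  imports "HOL-Analysis.Analysis" "HOL-Library.Extended_Real"
begin

definition proper_fun :: "('a \<Rightarrow> ereal) \<Rightarrow> bool" where
  "proper_fun g \<longleftrightarrow> (\<forall>x. g x \<noteq> -\<infinity>) \<and> (\<exists>x. g x \<noteq> \<infinity>)"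

definition closed_fun :: "('a::topological_space \<Rightarrow> ereal) \<Rightarrow> bool" where
  "closed_fun g \<longleftrightarrow> closed {(x, t::real). g x \<le> ereal t}"

definition convex_fun :: "('a::real_vector \<Rightarrow> ereal) \<Rightarrow> bool" where
  "convex_fun g \<longleftrightarrow> convex {(x, t::real). g x \<le> ereal t}"

definition subdiff :: "('a::real_inner \<Rightarrow> ereal) \<Rightarrow> 'a \<Rightarrow> 'a set" where
  "subdiff g x = {v. g x \<noteq> \<infinity> \<and> (\<forall>y. g y \<ge> g x + ereal (v \<bullet> (y - x)))}"

definition Prox :: "('a::real_normed_vector \<Rightarrow> ereal) \<Rightarrow> 'a \<Rightarrow> 'a" where
  "Prox h v = (THE x. \<forall>z. h x + ereal ((norm (x - v))\<^sup>2 / 2) \<le> h z + ereal ((norm (z - v))\<^sup>2 / 2))"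

end

theory Submission
  imports Defs
begin



lemma line_deriv:
  fixes h :: "'a::real_inner \<Rightarrow> real"
  assumes d: "\<And>z. (h has_derivative (\<lambda>k. Dh z \<bullet> k)) (at z)"
  shows "((\<lambda>t. h (v + t *\<^sub>R w)) has_real_derivative (Dh (v + t *\<^sub>R w) \<bullet> w)) (at t)"
proof -
  have l: "((\<lambda>t. v + t *\<^sub>R w) has_derivative (\<lambda>s. s *\<^sub>R w)) (at t)"
    by (auto intro!: derivative_eq_intros)
  have "((\<lambda>t. h (v + t *\<^sub>R w)) has_derivative (\<lambda>s. Dh (v + t *\<^sub>R w) \<bullet> (s *\<^sub>R w))) (at t)"
    using has_derivative_compose[OF l d] by (simp add: o_def)
  then show ?thesis
    by (rule has_derivative_imp_has_field_derivative) simp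
qed

lemma descent:
  fixes h :: "'a::real_inner \<Rightarrow> real"
  assumes d: "\<And>z. (h has_derivative (\<lambda>k. Dh z \<bullet> k)) (at z)"
    and lip: "\<And>u v. norm (Dh u - Dh v) \<le> M * norm (u - v)"
  shows "h z \<le> h v + Dh v \<bullet> (z - v) + M / 2 * (norm (z - v))\<^sup>2"
proof -
  define w where "w = z - v"
  define q where "q t = h (v + t *\<^sub>R w) - t * (Dh v \<bullet> w) - M / 2 * t\<^sup>2 * (norm w)\<^sup>2" for t
  have "q 1 \<le> q 0"
  proof (rule DERIV_nonpos_imp_nonincreasing[where f=q])
    fix t :: real assume t: "0 \<le> t" "t \<le> 1"
    have D: "(q has_real_derivative (Dh (v + t *\<^sub>R w) \<bullet> w - Dh v \<bullet> w - M / 2 * (2 * t) * (norm w)\<^sup>2)) (at t)"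
      unfolding q_def
      by (auto intro!: derivative_eq_intros line_deriv[OF d])
    have "Dh (v + t *\<^sub>R w) \<bullet> w - Dh v \<bullet> w = (Dh (v + t *\<^sub>R w) - Dh v) \<bullet> w"
      by (simp add: inner_diff_left)
    also have "\<dots> \<le> norm (Dh (v + t *\<^sub>R w) - Dh v) * norm w"
      by (rule Cauchy_Schwarz_ineq2[THEN order_trans[OF abs_ge_self]])
    also have "\<dots> \<le> M * norm (t *\<^sub>R w) * norm w"
    proof -
      have "norm (Dh (v + t *\<^sub>R w) - Dh v) \<le> M * norm (t *\<^sub>R w)"
        using lip[of "v + t *\<^sub>R w" v] by simp
      then show ?thesis by (rule mult_right_mono) simp
    qed
    also have "\<dots> = M * t * (norm w)\<^sup>2" using t by (simp add: power2_eq_square abs_of_nonneg algebra_simps)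
    finally have "Dh (v + t *\<^sub>R w) \<bullet> w - Dh v \<bullet> w - M / 2 * (2 * t) * (norm w)\<^sup>2 \<le> 0"
      by simp
    then show "\<exists>y. (q has_real_derivative y) (at t) \<and> y \<le> 0"
      using D by blast
  qed simp
  then show ?thesis unfolding q_def w_def by simp
qed

lemma conv_grad:
  fixes h :: "'a::real_inner \<Rightarrow> real"
  assumes c: "convex_on UNIV h"
    and d: "\<And>z. (h has_derivative (\<lambda>k. Dh z \<bullet> k)) (at z)"
  shows "h z \<ge> h v + Dh v \<bullet> (z - v)"
proof -
  define w where "w = z - v"
  define q where "q t = h (v + t *\<^sub>R w)" for t
  have cq: "convex_on UNIV q"
    unfolding q_def
  proof (rule convex_onI[OF _ convex_UNIV])
    fix t a b :: real assume t: "0 < t" "t < 1"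
    have "v + ((1 - t) * a + t * b) *\<^sub>R w = (1 - t) *\<^sub>R (v + a *\<^sub>R w) + t *\<^sub>R (v + b *\<^sub>R w)"
      by (simp add: algebra_simps)
    then show "h (v + ((1 - t) *\<^sub>R a + t *\<^sub>R b) *\<^sub>R w) \<le> (1 - t) * h (v + a *\<^sub>R w) + t * h (v + b *\<^sub>R w)"
      using convex_onD[OF c, of t] t by simp
  qed
  have "(q has_real_derivative (Dh v \<bullet> w)) (at 0)"
    unfolding q_def using line_deriv[OF d, of v w 0] by simp
  from convex_on_imp_above_tangent[OF cq, of 0 1, simplified, OF this]
  show ?thesis unfolding q_def w_def by simp
qed




lemma norm_add_scale_sq:
  fixes x y :: "'a::real_inner"
  shows "(norm (x + t *\<^sub>R y))\<^sup>2 = (norm x)\<^sup>2 + 2 * t * (x \<bullet> y) + t\<^sup>2 * (norm y)\<^sup>2"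
  unfolding power2_norm_eq_inner
  by (simp add: inner_add_left inner_add_right inner_commute algebra_simps power2_eq_square)

lemma g_real: "proper_fun g \<Longrightarrow> g z \<noteq> \<infinity> \<Longrightarrow> g z = ereal (real_of_ereal (g z))"
  by (cases "g z") (auto simp: proper_fun_def)

lemma g_conv:
  assumes "convex_fun g" "proper_fun g" "g z \<noteq> \<infinity>" "g w \<noteq> \<infinity>" "0 \<le> t" "t \<le> 1"
  shows "g ((1 - t) *\<^sub>R z + t *\<^sub>R w) \<le> ereal ((1 - t) * real_of_ereal (g z) + t * real_of_ereal (g w))"
proof -
  let ?S = "{(x, s::real). g x \<le> ereal s}"
  have c: "convex ?S" using assms(1) by (simp add: convex_fun_def)
  have "(z, real_of_ereal (g z)) \<in> ?S" using g_real[OF assms(2,3)] by simp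
  moreover have "(w, real_of_ereal (g w)) \<in> ?S" using g_real[OF assms(2,4)] by simp
  ultimately have "(1 - t) *\<^sub>R (z, real_of_ereal (g z)) + t *\<^sub>R (w, real_of_ereal (g w)) \<in> ?S"
    using convexD[OF c, of "(z, real_of_ereal (g z))" "(w, real_of_ereal (g w))" "1 - t" t] assms(5,6)
    by simp
  then show ?thesis by simp
qed

lemma g_closed:
  assumes "closed_fun g" "z \<longlonglongrightarrow> z0" "T \<longlonglongrightarrow> T0" "\<And>k. g (z k) \<le> ereal (T k)"
  shows "g z0 \<le> ereal T0"
proof -
  let ?S = "{(x, s::real). g x \<le> ereal s}"
  have c: "closed ?S" using assms(1) by (simp add: closed_fun_def)
  have "(z0, T0) \<in> ?S"
    by (rule closed_sequentially[OF c, of "\<lambda>k. (z k, T k)"]) (use assms in \<open>auto intro: tendsto_Pair\<close>)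
  then show ?thesis by simp
qed




lemma small_t:
  fixes X Y :: real
  assumes "Y \<ge> 0" "\<And>t. 0 < t \<Longrightarrow> t \<le> 1 \<Longrightarrow> 0 \<le> X + t * Y"
  shows "0 \<le> X"
proof (rule ccontr)
  assume "\<not> 0 \<le> X"
  hence X: "X < 0" by simp
  define t where "t = min 1 (- X / (2 * (Y + 1)))"
  have "- X / (2 * (Y + 1)) > 0" using X assms(1) by (intro divide_pos_pos) auto
  hence t: "0 < t" "t \<le> 1" by (auto simp: t_def)
  have "t * Y \<le> (- X / (2 * (Y + 1))) * Y" using assms(1) by (intro mult_right_mono) (auto simp: t_def)
  also have "\<dots> = - X * (Y / (2 * (Y + 1)))" by simp
  also have "\<dots> \<le> - X * (1/2)"
    using X assms(1) by (intro mult_left_mono) (auto simp: field_simps)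
  finally have "X + t * Y < 0" using X by simp
  with assms(2)[OF t] show False by simp
qed

lemma sublevel_bound:
  fixes r A B :: real
  assumes "r \<ge> 0" "A \<ge> 0" "r\<^sup>2 / 4 - A * r \<le> B"
  shows "r \<le> 4 * A + 4 + 4 * \<bar>B\<bar>"
proof (rule ccontr)
  assume "\<not> ?thesis"
  hence r: "r > 4 * A + 4 + 4 * \<bar>B\<bar>" by simp
  have "r / 4 - A \<ge> 1" using r by simp
  hence "r * 1 \<le> r * (r / 4 - A)" using assms(1) by (intro mult_left_mono) auto
  also have "\<dots> = r\<^sup>2 / 4 - A * r" by (simp add: power2_eq_square algebra_simps)
  finally have "r \<le> B" using assms(3) by simp
  with r assms(2) abs_ge_self[of B] show False by linarith
qed

lemma cvx_comb: "(1 - t) *\<^sub>R a + t *\<^sub>R b = a + t *\<^sub>R (b - (a::'a::real_vector))"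
  by (simp add: algebra_simps)

lemma lin_aux:
  fixes c am gm nm n0 ie ne nz a0 ae g0 gz :: real
  shows "c + am \<le> gm + nm/2 \<Longrightarrow> nm = n0 + 2*(1/2)*ie + 1/4*ne \<Longrightarrow> nz = n0 + 2*ie + ne \<Longrightarrow>
   am = a0 + 1/2*ae \<Longrightarrow> gm \<le> g0/2 + gz/2 \<Longrightarrow> 2*c + 2*a0 - (g0 + n0/2) + ae + ne/4 \<le> gz + nz/2"
  by linarith

lemma aux2:
  fixes gq gzt gz nq nzt ie ne t :: real
  assumes "gzt \<le> (1-t)*gq + t*gz" "gq + nq/2 \<le> gzt + nzt/2" "nzt = nq + 2*t*ie + t\<^sup>2*ne"
  shows "0 \<le> t * ((gz - gq + ie) + t * (ne/2))"
proof -
  have "t * ((gz - gq + ie) + t*(ne/2)) = ((1-t)*gq + t*gz + nzt/2) - (gq + nq/2)"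
    unfolding assms(3) by (simp add: algebra_simps power2_eq_square)
  then show ?thesis using assms by linarith
qed

lemma prox_main:
  fixes g :: "'a::euclidean_space \<Rightarrow> ereal"
  assumes gp: "proper_fun g" and gc: "closed_fun g" and gv: "convex_fun g" and L: "L > 0"
    and lb: "\<And>z. g z \<noteq> \<infinity> \<Longrightarrow> c + a \<bullet> z \<le> real_of_ereal (g z) / L + (norm (z - v))\<^sup>2 / 2"
  defines "p \<equiv> Prox (\<lambda>z. ereal (1 / L) * g z) v"
  shows "g p \<noteq> \<infinity> \<and> (\<forall>z. g z \<noteq> \<infinity> \<longrightarrow>
            real_of_ereal (g z) \<ge> real_of_ereal (g p) + L * ((v - p) \<bullet> (z - p)))"
proof -
  define G where "G z = real_of_ereal (g z)" for z
  define D where "D = {z. g z \<noteq> \<infinity>}"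
  define \<phi> where "\<phi> z = G z / L + (norm (z - v))\<^sup>2 / 2" for z
  have gG: "g z = ereal (G z)" if "z \<in> D" for z using g_real[OF gp] that by (simp add: G_def D_def)
  have conv: "(1 - t) *\<^sub>R z + t *\<^sub>R w \<in> D \<and> G ((1 - t) *\<^sub>R z + t *\<^sub>R w) \<le> (1 - t) * G z + t * G w"
    if "z \<in> D" "w \<in> D" "0 \<le> t" "t \<le> 1" for z w t
  proof -
    have *: "g ((1 - t) *\<^sub>R z + t *\<^sub>R w) \<le> ereal ((1 - t) * G z + t * G w)"
      using g_conv[OF gv gp, of z w t] that by (simp add: G_def D_def)
    hence "(1 - t) *\<^sub>R z + t *\<^sub>R w \<in> D" by (auto simp: D_def)
    with * show ?thesis using gG by auto
  qed
  obtain z0 where z0: "z0 \<in> D" using gp by (auto simp: proper_fun_def D_def)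
  define K where "K = 2 * c + 2 * (a \<bullet> z0) - \<phi> z0"
  have coer: "\<phi> z \<ge> K + a \<bullet> (z - z0) + (norm (z - z0))\<^sup>2 / 4" if z: "z \<in> D" for z
  proof -
    define m where "m = (1 - 1/2) *\<^sub>R z0 + (1/2::real) *\<^sub>R z"
    have cm: "m \<in> D" "G m \<le> (1 - 1/2) * G z0 + (1/2) * G z"
      using conv[OF z0 z, of "1/2"] by (auto simp: m_def)
    have mv: "m - v = (z0 - v) + (1/2) *\<^sub>R (z - z0)" unfolding m_def cvx_comb by (simp add: algebra_simps)
    have n1: "(norm (m - v))\<^sup>2 = (norm (z0 - v))\<^sup>2 + 2 * (1/2) * ((z0 - v) \<bullet> (z - z0)) + (1/2)\<^sup>2 * (norm (z - z0))\<^sup>2"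
      unfolding mv by (rule norm_add_scale_sq)
    have "z - v = (z0 - v) + 1 *\<^sub>R (z - z0)" by simp
    hence n2: "(norm (z - v))\<^sup>2 = (norm (z0 - v))\<^sup>2 + 2 * 1 * ((z0 - v) \<bullet> (z - z0)) + 1\<^sup>2 * (norm (z - z0))\<^sup>2"
      using norm_add_scale_sq[of "z0 - v" 1 "z - z0"] by simp
    have am: "a \<bullet> m = a \<bullet> z0 + (1/2) * (a \<bullet> (z - z0))"
      by (simp add: m_def inner_add_right inner_diff_right algebra_simps)
    have l: "c + a \<bullet> m \<le> G m / L + (norm (m - v))\<^sup>2 / 2" using lb[of m] cm by (simp add: G_def D_def)
    have "G m / L \<le> ((1 - 1/2) * G z0 + (1/2) * G z) / L" using cm(2) L by (simp add: divide_right_mono)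
    hence h: "G m / L \<le> (G z0 / L) / 2 + (G z / L) / 2" by (simp add: add_divide_distrib)
    have q: "(1/2::real)\<^sup>2 = 1/4" by (simp add: power2_eq_square)
    show ?thesis unfolding \<phi>_def K_def
      by (rule lin_aux[OF l n1[unfolded q] n2[unfolded power_one mult_1_right mult_1] am h])
  qed
  have cs: "a \<bullet> (z - z0) \<ge> - (norm a * norm (z - z0))" for z
    using Cauchy_Schwarz_ineq2[of a "z - z0"] by linarith
  have bdd: "\<phi> z \<ge> K - (norm a)\<^sup>2" if "z \<in> D" for z
  proof -
    have "0 \<le> (norm (z - z0) / 2 - norm a)\<^sup>2" by simp
    hence "0 \<le> (norm (z - z0))\<^sup>2 / 4 - norm a * norm (z - z0) + (norm a)\<^sup>2"
      by (simp add: power2_eq_square field_simps)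
    with coer[OF that] cs[of z] show ?thesis by linarith
  qed
  define R where "R = 4 * norm a + 4 + 4 * \<bar>\<phi> z0 + 1 - K\<bar>"
  have bnd: "norm (z - z0) \<le> R" if "z \<in> D" "\<phi> z \<le> \<phi> z0 + 1" for z
    unfolding R_def
    by (rule sublevel_bound) (use coer[OF that(1)] cs[of z] that(2) in auto)
  define m where "m = Inf (\<phi> ` D)"
  have bddb: "bdd_below (\<phi> ` D)"
    by (rule bdd_belowI[of _ "K - (norm a)\<^sup>2"]) (use bdd in auto)
  have mle: "m \<le> \<phi> z" if "z \<in> D" for z
    unfolding m_def using bddb that by (auto intro: cInf_lower)
  have "\<forall>k::nat. \<exists>z. z \<in> D \<and> \<phi> z < m + 1 / (real k + 1)"
  proof
    fix k :: nat
    have "Inf (\<phi> ` D) < m + 1 / (real k + 1)" unfolding m_def by simp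
    from cInf_lessD[OF _ this] z0 show "\<exists>z. z \<in> D \<and> \<phi> z < m + 1 / (real k + 1)" by auto
  qed
  then obtain zs where zs: "\<And>k. zs k \<in> D" "\<And>k. \<phi> (zs k) < m + 1 / (real k + 1)" by metis
  have zsb: "norm (zs k - z0) \<le> R" for k
  proof (rule bnd[OF zs(1)])
    have "1 / (real k + 1) \<le> 1" by simp
    with zs(2)[of k] mle[OF z0] show "\<phi> (zs k) \<le> \<phi> z0 + 1" by linarith
  qed
  have "norm (zs k) \<le> R + norm z0" for k
    using norm_triangle_sub[of "zs k" z0] zsb[of k] by linarith
  hence "bounded (range zs)" unfolding bounded_iff by blast
  then obtain zst \<sigma> where \<sigma>: "strict_mono \<sigma>" "(zs \<circ> \<sigma>) \<longlonglongrightarrow> zst"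
    using bounded_imp_convergent_subsequence by blast
  have inv0: "(\<lambda>j. 1 / (real (\<sigma> j) + 1)) \<longlonglongrightarrow> 0"
    using LIMSEQ_subseq_LIMSEQ[OF LIMSEQ_inverse_real_of_nat \<sigma>(1)] by (simp add: o_def add.commute divide_inverse)
  have phim: "(\<lambda>j. \<phi> (zs (\<sigma> j))) \<longlonglongrightarrow> m"
  proof (rule tendsto_sandwich[of "\<lambda>_. m" _ _ "\<lambda>j. m + 1 / (real (\<sigma> j) + 1)"])
    show "\<forall>\<^sub>F j in sequentially. m \<le> \<phi> (zs (\<sigma> j))" using mle zs(1) by (intro always_eventually allI) auto
    show "\<forall>\<^sub>F j in sequentially. \<phi> (zs (\<sigma> j)) \<le> m + 1 / (real (\<sigma> j) + 1)"
      using zs(2) by (intro always_eventually allI less_imp_le)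
    show "(\<lambda>j. m + 1 / (real (\<sigma> j) + 1)) \<longlonglongrightarrow> m" using tendsto_add[OF tendsto_const inv0] by simp
  qed simp
  have zl: "(\<lambda>j. zs (\<sigma> j)) \<longlonglongrightarrow> zst" using \<sigma>(2) by (simp add: o_def)
  have Tl: "(\<lambda>j. L * (\<phi> (zs (\<sigma> j)) - (norm (zs (\<sigma> j) - v))\<^sup>2 / 2)) \<longlonglongrightarrow> L * (m - (norm (zst - v))\<^sup>2 / 2)"
    by (intro tendsto_intros phim zl) simp_all
  have "g zst \<le> ereal (L * (m - (norm (zst - v))\<^sup>2 / 2))"
  proof (rule g_closed[OF gc zl Tl])
    fix j
    show "g (zs (\<sigma> j)) \<le> ereal (L * (\<phi> (zs (\<sigma> j)) - (norm (zs (\<sigma> j) - v))\<^sup>2 / 2))"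
      using gG[OF zs(1)] L by (simp add: \<phi>_def)
  qed
  hence gz: "g zst \<le> ereal (L * (m - (norm (zst - v))\<^sup>2 / 2))" .
  have "g zst \<noteq> \<infinity>" using gz by auto
  hence zstD: "zst \<in> D" by (simp add: D_def)
  have "G zst \<le> L * (m - (norm (zst - v))\<^sup>2 / 2)" using gz gG[OF zstD] by simp
  hence "G zst / L \<le> m - (norm (zst - v))\<^sup>2 / 2" using L by (simp add: divide_le_eq mult.commute)
  hence "\<phi> zst \<le> m" unfolding \<phi>_def by simp
  hence exmin: "zst \<in> D \<and> (\<forall>z\<in>D. \<phi> zst \<le> \<phi> z)" using zstD mle by force
  have subg: "G z \<ge> G q + L * ((v - q) \<bullet> (z - q))"
    if q: "q \<in> D" "\<forall>z\<in>D. \<phi> q \<le> \<phi> z" and z: "z \<in> D" for q z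
  proof -
    have tt: "0 \<le> (G z / L - G q / L + (q - v) \<bullet> (z - q)) + t * ((norm (z - q))\<^sup>2 / 2)"
      if t: "0 < t" "t \<le> 1" for t
    proof -
      define zt where "zt = (1 - t) *\<^sub>R q + t *\<^sub>R z"
      have czt: "zt \<in> D" "G zt \<le> (1 - t) * G q + t * G z" using conv[OF q(1) z, of t] t by (auto simp: zt_def)
      have ztv: "zt - v = (q - v) + t *\<^sub>R (z - q)" unfolding zt_def cvx_comb by (simp add: algebra_simps)
      have n: "(norm (zt - v))\<^sup>2 = (norm (q - v))\<^sup>2 + 2 * t * ((q - v) \<bullet> (z - q)) + t\<^sup>2 * (norm (z - q))\<^sup>2"
        unfolding ztv by (rule norm_add_scale_sq)
      have "G zt / L \<le> ((1 - t) * G q + t * G z) / L" using czt(2) L by (simp add: divide_right_mono)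
      also have "((1 - t) * G q + t * G z) / L = (1 - t) * (G q / L) + t * (G z / L)"
        using L by (simp add: field_simps)
      finally have h1: "G zt / L \<le> (1 - t) * (G q / L) + t * (G z / L)" .
      have h2: "G q / L + (norm (q - v))\<^sup>2 / 2 \<le> G zt / L + (norm (zt - v))\<^sup>2 / 2"
        using q(2) czt(1) unfolding \<phi>_def by blast
      have "0 \<le> t * ((G z / L - G q / L + (q - v) \<bullet> (z - q)) + t * ((norm (z - q))\<^sup>2 / 2))"
        by (rule aux2[OF h1 h2 n])
      with t show ?thesis by (simp add: zero_le_mult_iff)
    qed
    have "0 \<le> G z / L - G q / L + (q - v) \<bullet> (z - q)" by (rule small_t[OF _ tt]) simp_all
    hence "0 \<le> L * (G z / L - G q / L + (q - v) \<bullet> (z - q))" using L by simp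
    hence "0 \<le> G z - G q + L * ((q - v) \<bullet> (z - q))" using L by (simp add: algebra_simps)
    moreover have "(v - q) \<bullet> (z - q) = - ((q - v) \<bullet> (z - q))" by (simp add: inner_diff_left)
    ultimately show ?thesis by simp
  qed
  have three: "\<phi> z \<ge> \<phi> q + (norm (z - q))\<^sup>2 / 2"
    if q: "q \<in> D" "\<forall>z\<in>D. \<phi> q \<le> \<phi> z" and z: "z \<in> D" for q z
  proof -
    have s: "G z \<ge> G q + L * ((v - q) \<bullet> (z - q))" by (rule subg[OF q z])
    have "z - v = (q - v) + 1 *\<^sub>R (z - q)" by simp
    hence n: "(norm (z - v))\<^sup>2 = (norm (q - v))\<^sup>2 + 2 * 1 * ((q - v) \<bullet> (z - q)) + 1\<^sup>2 * (norm (z - q))\<^sup>2"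
      using norm_add_scale_sq[of "q - v" 1 "z - q"] by simp
    have e: "(v - q) \<bullet> (z - q) = - ((q - v) \<bullet> (z - q))" by (simp add: inner_diff_left)
    have "(G q + L * ((v - q) \<bullet> (z - q))) / L \<le> G z / L"
      using divide_right_mono[OF s] L by simp
    moreover have "(G q + L * ((v - q) \<bullet> (z - q))) / L = G q / L + (v - q) \<bullet> (z - q)"
      using L by (simp add: add_divide_distrib)
    ultimately have "G z / L \<ge> G q / L + (v - q) \<bullet> (z - q)" by simp
    with n[unfolded power_one mult_1_right mult_1] e show ?thesis unfolding \<phi>_def by linarith
  qed
  define P where "P q = (\<forall>z. ereal (1 / L) * g q + ereal ((norm (q - v))\<^sup>2 / 2)
                          \<le> ereal (1 / L) * g z + ereal ((norm (z - v))\<^sup>2 / 2))" for q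
  have hD: "ereal (1 / L) * g z = ereal (G z / L)" if "z \<in> D" for z
    using gG[OF that] by simp
  have hN: "ereal (1 / L) * g z = \<infinity>" if "z \<notin> D" for z
    using that L by (simp add: D_def)
  have PM: "P q \<longleftrightarrow> q \<in> D \<and> (\<forall>z\<in>D. \<phi> q \<le> \<phi> z)" for q
  proof
    assume Pq: "P q"
    have qD: "q \<in> D"
    proof (rule ccontr)
      assume "q \<notin> D"
      with Pq[unfolded P_def, rule_format, of z0] hN hD[OF z0] show False by simp
    qed
    moreover have "\<forall>z\<in>D. \<phi> q \<le> \<phi> z"
    proof
      fix z assume "z \<in> D"
      with Pq[unfolded P_def, rule_format, of z] hD[OF qD] hD show "\<phi> q \<le> \<phi> z"
        by (simp add: \<phi>_def)
    qed
    ultimately show "q \<in> D \<and> (\<forall>z\<in>D. \<phi> q \<le> \<phi> z)" by blast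
  next
    assume M: "q \<in> D \<and> (\<forall>z\<in>D. \<phi> q \<le> \<phi> z)"
    show "P q" unfolding P_def
    proof
      fix z show "ereal (1 / L) * g q + ereal ((norm (q - v))\<^sup>2 / 2)
                          \<le> ereal (1 / L) * g z + ereal ((norm (z - v))\<^sup>2 / 2)"
      proof (cases "z \<in> D")
        case True then show ?thesis using M hD[of q] hD[of z] by (simp add: \<phi>_def)
      next
        case False then show ?thesis by (simp only: hN[OF False]) simp
      qed
    qed
  qed
  have ex1: "\<exists>!q. P q"
  proof (rule ex1I[of _ zst])
    show "P zst" using PM exmin by blast
    fix q assume "P q"
    hence Mq: "q \<in> D" "\<forall>z\<in>D. \<phi> q \<le> \<phi> z" using PM by auto
    have "\<phi> zst \<ge> \<phi> q + (norm (zst - q))\<^sup>2 / 2" using three[OF Mq zstD] .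
    moreover have "\<phi> zst \<le> \<phi> q" using exmin Mq(1) by blast
    ultimately have "(norm (zst - q))\<^sup>2 \<le> 0" by linarith
    thus "q = zst" by simp
  qed
  have "P p" unfolding p_def Prox_def using theI'[OF ex1] unfolding P_def .
  hence Mp: "p \<in> D" "\<forall>z\<in>D. \<phi> p \<le> \<phi> z" using PM by auto
  show ?thesis using Mp subg[OF Mp] by (auto simp: D_def G_def)
qed




lemma quad_id:
  fixes a b c :: "'a::real_inner"
  shows "L/2*(norm(a-c))\<^sup>2 + l/2*(norm(b-c))\<^sup>2 - L*((c-a) \<bullet> (b-a)) = (L+l)/2*(norm(b-c))\<^sup>2 - L/2*(norm(b-a))\<^sup>2"
  unfolding power2_norm_eq_inner
  by (simp add: inner_diff_left inner_diff_right inner_commute algebra_simps) (simp add: field_simps)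

lemma decr_aux:
  fixes f1a f1b f1c f2a f2b f2c d1ac d1bc d1ba d2ac d2bc d2ba Q1 Q2 P R Ga Gb :: real
  shows "f1a \<le> f1c + d1ac + Q1 \<Longrightarrow> f1c + d1bc \<le> f1b \<Longrightarrow> f2c + d2ac \<le> f2a \<Longrightarrow> f2b \<le> f2c + d2bc + Q2
    \<Longrightarrow> Gb \<ge> Ga + P - d1ba + d2ba \<Longrightarrow> Q1 + Q2 - P = R \<Longrightarrow> d1ac - d1bc + d1ba = 0 \<Longrightarrow> d2ac - d2bc + d2ba = 0
    \<Longrightarrow> f1a - f2a + Ga \<le> f1b - f2b + Gb + R"
  by linarith




theorem lemma3p4:
  fixes g :: "real^'n \<Rightarrow> ereal"
    and f1 f2 :: "real^'n \<Rightarrow> real"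
    and Df1 Df2 :: "real^'n \<Rightarrow> real^'n"
    and L l :: real
    and \<beta> :: "nat \<Rightarrow> real"
    and x y :: "nat \<Rightarrow> real^'n"
  assumes g: "proper_fun g" "closed_fun g" "convex_fun g"
    and f1: "convex_on UNIV f1" "\<And>z. (f1 has_derivative (\<lambda>h. Df1 z \<bullet> h)) (at z)"
    and f2: "convex_on UNIV f2" "\<And>z. (f2 has_derivative (\<lambda>h. Df2 z \<bullet> h)) (at z)"
    and Lip1: "\<And>u v. norm (Df1 u - Df1 v) \<le> L * norm (u - v)"
    and Lip2: "\<And>u v. norm (Df2 u - Df2 v) \<le> l * norm (u - v)"
    and L: "L > 0" "l \<ge> 0" "L \<ge> l"
    and attained: "\<exists>xs. \<forall>z. ereal (f1 xs - f2 xs) + g xs \<le> ereal (f1 z - f2 z) + g z"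
    and inf_fin: "(INF z. ereal (f1 z - f2 z) + g z) > -\<infinity>"
    and x0: "g (x 0) \<noteq> \<infinity>"
    and beta: "\<And>k. 0 \<le> \<beta> k \<and> \<beta> k \<le> sqrt (L / (L + l))"
    and beta_sup: "(SUP k. \<beta> k) < sqrt (L / (L + l))"
    and y_def: "\<And>k. y k = x k + \<beta> k *\<^sub>R (x k - x (k - 1))"
    and x_step: "\<And>k. x (Suc k) = Prox (\<lambda>z. ereal (1 / L) * g z)
                                      (y k - (1 / L) *\<^sub>R (Df1 (y k) - Df2 (y k)))"
  shows "summable (\<lambda>k. (norm (x (Suc k) - x k))\<^sup>2) \<and>
         (\<forall>xb r. strict_mono r \<and> (x \<circ> r) \<longlonglongrightarrow> xb \<longrightarrow>
           0 \<in> {Df1 xb - Df2 xb + v | v. v \<in> subdiff g xb})"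
proof -
  define G where "G z = real_of_ereal (g z)" for z
  define D where "D = {z. g z \<noteq> \<infinity>}"
  define F where "F z = f1 z - f2 z + G z" for z
  have gG: "g z = ereal (G z)" if "z \<in> D" for z using g_real[OF g(1)] that by (simp add: G_def D_def)
  obtain xs where xs: "\<And>z. ereal (f1 xs - f2 xs) + g xs \<le> ereal (f1 z - f2 z) + g z"
    using attained by blast
  have x0D: "x 0 \<in> D" using x0 by (simp add: D_def)
  have xsD: "xs \<in> D"
  proof -
    have "ereal (f1 xs - f2 xs) + g xs \<le> ereal (f1 (x 0) - f2 (x 0)) + ereal (G (x 0))"
      using xs[of "x 0"] gG[OF x0D] by simp
    hence "g xs \<noteq> \<infinity>" by auto
    thus ?thesis by (simp add: D_def)
  qed
  define Fmin where "Fmin = F xs"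
  have Fmin: "Fmin \<le> F z" if "z \<in> D" for z
    using xs[of z] gG[OF that] gG[OF xsD] by (simp add: Fmin_def F_def)
  have prox: "Prox (\<lambda>z. ereal (1 / L) * g z) u \<in> D \<and>
      (\<forall>z\<in>D. G z \<ge> G (Prox (\<lambda>z. ereal (1 / L) * g z) u)
          + L * ((u - Prox (\<lambda>z. ereal (1 / L) * g z) u) \<bullet> (z - Prox (\<lambda>z. ereal (1 / L) * g z) u)))" for u
  proof -
    define Du where "Du = Df1 u - Df2 u"
    have lb: "(Fmin - f1 u + f2 u + Du \<bullet> u) / L + (- (1 / L) *\<^sub>R Du) \<bullet> z
          \<le> real_of_ereal (g z) / L + (norm (z - u))\<^sup>2 / 2" if "g z \<noteq> \<infinity>" for z
    proof -
      have zD: "z \<in> D" using that by (simp add: D_def)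
      have d1: "f1 z \<le> f1 u + Df1 u \<bullet> (z - u) + L / 2 * (norm (z - u))\<^sup>2"
        by (rule descent[OF f1(2) Lip1])
      have c2: "f2 z \<ge> f2 u + Df2 u \<bullet> (z - u)" by (rule conv_grad[OF f2])
      have e: "Du \<bullet> (z - u) = Df1 u \<bullet> (z - u) - Df2 u \<bullet> (z - u)" by (simp add: Du_def inner_diff_left)
      have "Fmin - f1 u + f2 u - Du \<bullet> (z - u) \<le> G z + L / 2 * (norm (z - u))\<^sup>2"
        using Fmin[OF zD] d1 c2 e unfolding F_def by linarith
      hence "(Fmin - f1 u + f2 u - Du \<bullet> (z - u)) / L \<le> (G z + L / 2 * (norm (z - u))\<^sup>2) / L"
        using L by (simp add: divide_right_mono)
      also have "\<dots> = G z / L + (norm (z - u))\<^sup>2 / 2" using L by (simp add: field_simps)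
      also have "(Fmin - f1 u + f2 u - Du \<bullet> (z - u)) / L = (Fmin - f1 u + f2 u + Du \<bullet> u) / L + (- (1 / L) *\<^sub>R Du) \<bullet> z"
        by (simp add: inner_diff_right diff_divide_distrib add_divide_distrib)
      finally show ?thesis by (simp add: G_def)
    qed
    from prox_main[OF g(1) g(2) g(3) L(1) lb] show ?thesis by (auto simp: D_def G_def)
  qed
  define u where "u k = y k - (1 / L) *\<^sub>R (Df1 (y k) - Df2 (y k))" for k
  have xS: "x (Suc k) = Prox (\<lambda>z. ereal (1 / L) * g z) (u k)" for k using x_step by (simp add: u_def)
  have xSD: "x (Suc k) \<in> D" for k using prox[of "u k"] xS by simp
  have xsub: "G z \<ge> G (x (Suc k)) + L * ((u k - x (Suc k)) \<bullet> (z - x (Suc k)))" if "z \<in> D" for z k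
    using prox[of "u k"] xS that by simp
  have xD: "x k \<in> D" for k by (cases k) (use x0D xSD in auto)
  have decr: "F (x (Suc k)) \<le> F (x k) + ((L + l) / 2 * (norm (x k - y k))\<^sup>2 - L / 2 * (norm (x k - x (Suc k)))\<^sup>2)" for k
  proof -
    define a where "a = x (Suc k)"
    define b where "b = x k"
    define c where "c = y k"
    have 1: "f1 a \<le> f1 c + Df1 c \<bullet> (a - c) + L / 2 * (norm (a - c))\<^sup>2" by (rule descent[OF f1(2) Lip1])
    have 2: "f1 c + Df1 c \<bullet> (b - c) \<le> f1 b" by (rule conv_grad[OF f1])
    have 3: "f2 c + Df2 c \<bullet> (a - c) \<le> f2 a" by (rule conv_grad[OF f2])
    have 4: "f2 b \<le> f2 c + Df2 c \<bullet> (b - c) + l / 2 * (norm (b - c))\<^sup>2" by (rule descent[OF f2(2) Lip2])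
    have s: "G b \<ge> G a + L * ((u k - a) \<bullet> (b - a))" using xsub[OF xD[of k], of k] by (simp add: a_def b_def)
    have "L * ((u k - a) \<bullet> (b - a)) = L * ((c - a) \<bullet> (b - a)) - Df1 c \<bullet> (b - a) + Df2 c \<bullet> (b - a)"
      using L by (simp add: u_def c_def inner_diff_left algebra_simps)
    with s have 5: "G b \<ge> G a + L * ((c - a) \<bullet> (b - a)) - Df1 c \<bullet> (b - a) + Df2 c \<bullet> (b - a)" by simp
    have 6: "L/2*(norm(a-c))\<^sup>2 + l/2*(norm(b-c))\<^sup>2 - L*((c-a) \<bullet> (b-a)) = (L+l)/2*(norm(b-c))\<^sup>2 - L/2*(norm(b-a))\<^sup>2"
      by (rule quad_id)
    have 7: "Df1 c \<bullet> (a - c) - Df1 c \<bullet> (b - c) + Df1 c \<bullet> (b - a) = 0" by (simp add: inner_diff_right)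
    have 8: "Df2 c \<bullet> (a - c) - Df2 c \<bullet> (b - c) + Df2 c \<bullet> (b - a) = 0" by (simp add: inner_diff_right)
    from decr_aux[OF 1 2 3 4 5 6 7 8] show ?thesis by (simp add: F_def a_def b_def c_def)
  qed
  define bb where "bb = (SUP k. \<beta> k)"
  have bdd: "bdd_above (range \<beta>)"
    by (rule bdd_aboveI[of _ "sqrt (L / (L + l))"]) (use beta in auto)
  have bk: "\<beta> k \<le> bb" for k unfolding bb_def using cSUP_upper[OF _ bdd, of k] by simp
  have bk0: "0 \<le> \<beta> k" for k using beta by simp
  have bb0: "0 \<le> bb" using bk[of 0] bk0[of 0] by simp
  have Lpos: "L + l > 0" using L by simp
  have bb2: "bb\<^sup>2 < L / (L + l)"
  proof -
    have "bb\<^sup>2 < (sqrt (L / (L + l)))\<^sup>2"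
      using beta_sup bb0 unfolding bb_def by (intro power_strict_mono) auto
    also have "\<dots> = L / (L + l)" using L Lpos by (intro real_sqrt_pow2) simp
    finally show ?thesis .
  qed
  define cc where "cc = (L - (L + l) * bb\<^sup>2) / 2"
  have cc: "cc > 0"
  proof -
    have "(L + l) * bb\<^sup>2 < (L + l) * (L / (L + l))" using bb2 Lpos by (intro mult_strict_left_mono) auto
    also have "\<dots> = L" using Lpos by simp
    finally show ?thesis unfolding cc_def by simp
  qed
  define dd where "dd k = norm (x k - x (k - 1))" for k
  have xy: "norm (x k - y k) = \<beta> k * dd k" for k
  proof -
    have "x k - y k = - (\<beta> k *\<^sub>R (x k - x (k - 1)))" using y_def[of k] by simp
    hence "norm (x k - y k) = norm (\<beta> k *\<^sub>R (x k - x (k - 1)))" by (simp only: norm_minus_cancel)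
    thus ?thesis using bk0[of k] by (simp add: dd_def)
  qed
  have ddS: "dd (Suc k) = norm (x k - x (Suc k))" for k by (simp add: dd_def norm_minus_commute)
  define E where "E k = F (x k) + L / 2 * (dd k)\<^sup>2" for k
  have Estep: "E (Suc k) \<le> E k - cc * (dd k)\<^sup>2" for k
  proof -
    have "(\<beta> k)\<^sup>2 \<le> bb\<^sup>2" using bk[of k] bk0[of k] by (intro power_mono) auto
    hence "(\<beta> k)\<^sup>2 * (dd k)\<^sup>2 \<le> bb\<^sup>2 * (dd k)\<^sup>2" by (intro mult_right_mono) auto
    hence "(L + l) / 2 * ((\<beta> k)\<^sup>2 * (dd k)\<^sup>2) \<le> (L + l) / 2 * (bb\<^sup>2 * (dd k)\<^sup>2)"
      using Lpos by (intro mult_left_mono) auto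
    moreover have nx: "(norm (x k - y k))\<^sup>2 = (\<beta> k)\<^sup>2 * (dd k)\<^sup>2" by (simp add: xy power_mult_distrib)
    moreover have "cc * (dd k)\<^sup>2 = L / 2 * (dd k)\<^sup>2 - (L + l) / 2 * (bb\<^sup>2 * (dd k)\<^sup>2)"
      by (simp add: cc_def field_simps)
    ultimately show ?thesis using decr[of k, unfolded nx] unfolding E_def ddS by linarith
  qed
  have psum: "(\<Sum>k\<le>n. cc * (dd k)\<^sup>2) \<le> E 0 - E (Suc n)" for n
  proof (induction n)
    case 0 then show ?case using Estep[of 0] by simp
  next
    case (Suc n) then show ?case using Estep[of "Suc n"] by simp
  qed
  have Elow: "E k \<ge> Fmin" for k
    using Fmin[OF xD[of k]] L unfolding E_def by (simp add: add_increasing2)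
  have "(\<Sum>k\<le>n. (dd k)\<^sup>2) \<le> (E 0 - Fmin) / cc" for n
  proof -
    have "cc * (\<Sum>k\<le>n. (dd k)\<^sup>2) \<le> E 0 - Fmin"
      using psum[of n] Elow[of "Suc n"] by (simp add: sum_distrib_left)
    thus ?thesis using cc by (simp add: pos_le_divide_eq mult.commute)
  qed
  hence sd: "summable (\<lambda>k. (dd k)\<^sup>2)" by (intro bounded_imp_summable) auto
  hence part1: "summable (\<lambda>k. (norm (x (Suc k) - x k))\<^sup>2)"
    using summable_Suc_iff[of "\<lambda>k. (dd k)\<^sup>2"] by (simp add: dd_def)
  have dd0: "(\<lambda>k. (dd k)\<^sup>2) \<longlonglongrightarrow> 0" using summable_LIMSEQ_zero[OF sd] .
  have ddz: "dd \<longlonglongrightarrow> 0"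
  proof -
    have "(\<lambda>k. sqrt ((dd k)\<^sup>2)) \<longlonglongrightarrow> sqrt 0" by (intro tendsto_real_sqrt dd0)
    moreover have "sqrt ((dd k)\<^sup>2) = dd k" for k by (simp add: dd_def)
    ultimately show ?thesis by simp
  qed
  have dv: "(\<lambda>k. x k - x (k - 1)) \<longlonglongrightarrow> 0"
    using ddz unfolding dd_def by (simp add: tendsto_norm_zero_iff)
  have part2: "0 \<in> {Df1 xb - Df2 xb + v | v. v \<in> subdiff g xb}"
    if r: "strict_mono r" "(x \<circ> r) \<longlonglongrightarrow> xb" for xb r
  proof -
    define s where "s j = r (Suc j) - 1" for j
    have rge: "r (Suc j) \<ge> Suc j" for j using seq_suble[OF r(1)] by blast
    have sS: "Suc (s j) = r (Suc j)" for j using rge[of j] by (simp add: s_def)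
    have smono: "strict_mono s"
      unfolding strict_mono_Suc_iff
    proof
      fix j have "r (Suc j) < r (Suc (Suc j))" using r(1) by (simp add: strict_mono_def)
      thus "s j < s (Suc j)" using rge[of j] by (simp add: s_def)
    qed
    have xa: "(\<lambda>j. x (Suc (s j))) \<longlonglongrightarrow> xb"
      using LIMSEQ_Suc[OF r(2)] by (simp add: sS o_def)
    have dvs: "(\<lambda>j. x (s j) - x (s j - 1)) \<longlonglongrightarrow> 0"
      using LIMSEQ_subseq_LIMSEQ[OF dv smono] by (simp add: o_def)
    have dvs1: "(\<lambda>j. x (Suc (s j)) - x (s j)) \<longlonglongrightarrow> 0"
      using LIMSEQ_subseq_LIMSEQ[OF LIMSEQ_Suc[OF dv] smono] by (simp add: o_def)
    have xsj: "(\<lambda>j. x (s j)) \<longlonglongrightarrow> xb"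
    proof -
      have "(\<lambda>j. x (Suc (s j)) - (x (Suc (s j)) - x (s j))) \<longlonglongrightarrow> xb - 0" by (intro tendsto_diff xa dvs1)
      thus ?thesis by simp
    qed
    define B where "B = sqrt (L / (L + l))"
    have bsmall: "(\<lambda>j. \<beta> (s j) *\<^sub>R (x (s j) - x (s j - 1))) \<longlonglongrightarrow> 0"
    proof (rule Lim_null_comparison)
      have "norm (\<beta> (s j) *\<^sub>R (x (s j) - x (s j - 1))) \<le> B * norm (x (s j) - x (s j - 1))" for j
      proof -
        have "norm (\<beta> (s j) *\<^sub>R (x (s j) - x (s j - 1))) = \<beta> (s j) * norm (x (s j) - x (s j - 1))"
          using bk0[of "s j"] by simp
        also have "\<dots> \<le> B * norm (x (s j) - x (s j - 1))"
          using beta[of "s j"] unfolding B_def by (intro mult_right_mono) auto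
        finally show ?thesis .
      qed
      thus "\<forall>\<^sub>F j in sequentially. norm (\<beta> (s j) *\<^sub>R (x (s j) - x (s j - 1))) \<le> B * norm (x (s j) - x (s j - 1))"
        by (intro always_eventually allI)
      show "(\<lambda>j. B * norm (x (s j) - x (s j - 1))) \<longlonglongrightarrow> 0"
        using tendsto_mult[OF tendsto_const tendsto_norm_zero[OF dvs], of B] by simp
    qed
    have ysj: "(\<lambda>j. y (s j)) \<longlonglongrightarrow> xb"
      using tendsto_add[OF xsj bsmall] by (simp add: y_def)
    have Dlim: "(\<lambda>j. Dh (y (s j))) \<longlonglongrightarrow> Dh xb"
      if lip: "\<And>u v. norm (Dh u - Dh v) \<le> M * norm (u - v)" for Dh :: "real^'n \<Rightarrow> real^'n" and M
    proof -
      have "(\<lambda>j. Dh (y (s j)) - Dh xb) \<longlonglongrightarrow> 0"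
      proof (rule Lim_null_comparison)
        show "\<forall>\<^sub>F j in sequentially. norm (Dh (y (s j)) - Dh xb) \<le> M * norm (y (s j) - xb)"
          using lip by (intro always_eventually allI)
        have yz: "(\<lambda>j. y (s j) - xb) \<longlonglongrightarrow> 0" using ysj by (simp add: LIM_zero)
        show "(\<lambda>j. M * norm (y (s j) - xb)) \<longlonglongrightarrow> 0"
          using tendsto_mult[OF tendsto_const tendsto_norm_zero[OF yz], of M] by simp
      qed
      thus ?thesis by (simp add: LIM_zero_iff)
    qed
    define Dx where "Dx = Df1 xb - Df2 xb"
    have ulim: "(\<lambda>j. u (s j)) \<longlonglongrightarrow> xb - (1 / L) *\<^sub>R Dx"
      unfolding u_def Dx_def by (intro tendsto_intros ysj Dlim[OF Lip1] Dlim[OF Lip2])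
    have bnd: "g xb \<le> ereal (G z + Dx \<bullet> (z - xb))" if zD: "z \<in> D" for z
    proof -
      have T: "(\<lambda>j. G z - L * ((u (s j) - x (Suc (s j))) \<bullet> (z - x (Suc (s j)))))
            \<longlonglongrightarrow> G z - L * (((xb - (1 / L) *\<^sub>R Dx) - xb) \<bullet> (z - xb))"
        by (intro tendsto_intros ulim xa)
      have eq: "G z - L * (((xb - (1 / L) *\<^sub>R Dx) - xb) \<bullet> (z - xb)) = G z + Dx \<bullet> (z - xb)"
        using L by simp
      have "g xb \<le> ereal (G z - L * (((xb - (1 / L) *\<^sub>R Dx) - xb) \<bullet> (z - xb)))"
      proof (rule g_closed[OF g(2) xa T])
        fix j
        show "g (x (Suc (s j))) \<le> ereal (G z - L * ((u (s j) - x (Suc (s j))) \<bullet> (z - x (Suc (s j)))))"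
          using xsub[OF zD, of "s j"] gG[OF xSD[of "s j"]] by simp
      qed
      thus ?thesis using eq by simp
    qed
    have "g xb \<noteq> \<infinity>" using bnd[OF x0D] by auto
    hence xbD: "xb \<in> D" by (simp add: D_def)
    have "- Dx \<in> subdiff g xb"
      unfolding subdiff_def
    proof (intro CollectI conjI allI)
      show "g xb \<noteq> \<infinity>" using xbD by (simp add: D_def)
      fix z show "g xb + ereal (- Dx \<bullet> (z - xb)) \<le> g z"
      proof (cases "z \<in> D")
        case True
        have "g xb + ereal (- Dx \<bullet> (z - xb)) = ereal (G xb - Dx \<bullet> (z - xb))" using gG[OF xbD] by simp
        also have "\<dots> \<le> ereal (G z)" using bnd[OF True] gG[OF xbD] by simp
        finally show ?thesis using gG[OF True] by simp
      next
        case False then show ?thesis by (simp add: D_def)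
      qed
    qed
    moreover have "0 = Df1 xb - Df2 xb + - Dx" by (simp add: Dx_def)
    ultimately show ?thesis by blast
  qed
  show ?thesis using part1 part2 by blast
qed

end
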